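(* Let $(X(t),T(t))_{t\ge0}$ be the joint KMP–temperature process described in the context, with arbitrary initial condition $(X(0),T(0))\in\mathbb R_+^{\overline{\mathbb V}}\times\mathbb R_+^{\overline{\mathbb V}}$ satisfying $T_j(0)=T_j$ for all $j\in\partial\mathbb V$, and define $\zeta_i(t):=X_i(t)T_i(t)$ for $i\in\overline{\mathbb V}$. Then the marginal process $X(t)$ is a Markov process with generator $L^\zeta$ with boundary temperatures identically equal to $1$ (i.e. $T_j=1$ for all $j\in\partial\mathbb V$ in the definition of $L^\zeta$), and the process $\zeta(t)$ is a Markov process with generator $L^\zeta$ with boundary temperatures $T_{\partial\mathbb V}=(T_j)_{j\in\partial\mathbb V}$; that is, both are boundary driven KMP processes.
   Context: Graph: $(\overline{\mathbb V},\overline E)$ is a finite oriented graph; $\overline{\mathbb V}=\mathbb V\cup\partial\mathbb V$ (disjoint; internal and boundary vertices). There is at most one edge between any pair of vertices and if $ij\in\overline E$ then $ji\notin\overline E$. $E$ is the set of edges with both endpoints in $\mathbb V$, $\partial E$ the set of edges with one endpoint in $\partial\mathbb V$; there are no edges between two boundary vertices, and every boundary edge is written $ij$ with $i\in\mathbb V$, $j\in\partial\mathbb V$. $\overline E=E\cup\partial E$. Each $j\in\partial\mathbb V$ carries a fixed temperature $T_j>0$. KMP process with boundary temperatures $T_{\partial\mathbb V}$: Markov process on $\mathbb R_+^{\overline{\mathbb V}}$ with generator $L^\zeta f(\zeta)=\sum_{ij\in E}\int_0^1du\,[f(H^\zeta_{ij;u}\zeta)-f(\zeta)]+\sum_{ij\in\partial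 E}\int_0^1du\int_0^\infty db\,e^{-b}[f(H^\zeta_{ij;u,b}\zeta)-f(\zeta)]$, where $(H^\zeta_{ij;u}\zeta)_i=u(\zeta_i+\zeta_j)$, $(H^\zeta_{ij;u}\zeta)_j=(1-u)(\zeta_i+\zeta_j)$, $(H^\zeta_{ij;u,b}\zeta)_i=u(\zeta_i+\zeta_j)$, $(H^\zeta_{ij;u,b}\zeta)_j=bT_j$, and all other coordinates unchanged. Joint KMP–temperature process $(X,T)$ on $\mathbb R_+^{\overline{\mathbb V}}\times\mathbb R_+^{\overline{\mathbb V}}$: generator $L^{X,T}f(X,T)=\sum_{ij\in E}\int_0^1du\,[f(H_{i,j;u}(X,T))-f(X,T)]+\sum_{ij\in\partial E}\int_0^\infty db\,e^{-b}\int_0^1du\,[f(H_{i,j;b,u}(X,T))-f(X,T)]$, where, writing $\bar T:=\frac{X_i}{X_i+X_j}T_i+\frac{X_j}{X_i+X_j}T_j$: $H_{i,j;u}$ sets $(X_i,T_i)\to(u(X_i+X_j),\bar T)$, $(X_j,T_j)\to((1-u)(X_i+X_j),\bar T)$ and leaves other coordinates unchanged; $H_{i,j;b,u}$ (for $j\in\partial\mathbb V$) sets $(X_i,T_i)\to(u(X_i+X_j),\bar T)$, $(X_j,T_j)\to(b,T_j)$ and leaves other coordinates unchanged. In particular $T_j(t)=T_j$ for all $t$ and all $j\in\partial\mathbb V$. *)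

theory Defs
  imports "HOL-Analysis.Analysis"
begin

text \<open>The full vertex set is the finite type 'v; B is the set of
boundary vertices, internal vertices are those not in B. Ed is the set of all oriented
edges (the paper's E-bar). Internal edges: both endpoints internal; boundary edges (i,j):
i internal, j in B.\<close>

definition graph_ok :: "('v \<times> 'v) set \<Rightarrow> 'v set \<Rightarrow> bool" where
  "graph_ok Ed B \<longleftrightarrow> (\<forall>(i,j)\<in>Ed. (j,i) \<notin> Ed \<and> i \<notin> B)"

definition int_edges :: "('v \<times> 'v) set \<Rightarrow> 'v set \<Rightarrow> ('v \<times> 'v) set" where
  "int_edges Ed B = {e \<in> Ed. snd e \<notin> B}"

definition bd_edges :: "('v \<times> 'v) set \<Rightarrow> 'v set \<Rightarrow> ('v \<times> 'v) set" where
  "bd_edges Ed B = {e \<in> Ed. snd e \<in> B}"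

definition KMP_gen ::
  "('v \<times> 'v) set \<Rightarrow> 'v set \<Rightarrow> ('v \<Rightarrow> real) \<Rightarrow> (('v \<Rightarrow> real) \<Rightarrow> real) \<Rightarrow> ('v \<Rightarrow> real) \<Rightarrow> real" where
  "KMP_gen Ed B Tb f z =
     (\<Sum>(i,j)\<in>int_edges Ed B.
        (\<integral>u\<in>{0..1}. (f (z(i := u * (z i + z j), j := (1 - u) * (z i + z j))) - f z) \<partial>lborel))
   + (\<Sum>(i,j)\<in>bd_edges Ed B.
        (\<integral>u\<in>{0..1}. (\<integral>b\<in>{0..}. exp (- b) *
            (f (z(i := u * (z i + z j), j := b * Tb j)) - f z) \<partial>lborel) \<partial>lborel))"

definition Tbar :: "('v \<Rightarrow> real) \<Rightarrow> ('v \<Rightarrow> real) \<Rightarrow> 'v \<Rightarrow> 'v \<Rightarrow> real" where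
  "Tbar X T i j = X i / (X i + X j) * T i + X j / (X i + X j) * T j"

definition XT_gen ::
  "('v \<times> 'v) set \<Rightarrow> 'v set \<Rightarrow> (('v \<Rightarrow> real) \<times> ('v \<Rightarrow> real) \<Rightarrow> real)
     \<Rightarrow> ('v \<Rightarrow> real) \<times> ('v \<Rightarrow> real) \<Rightarrow> real" where
  "XT_gen Ed B f s = (case s of (X, T) \<Rightarrow>
     (\<Sum>(i,j)\<in>int_edges Ed B.
        (\<integral>u\<in>{0..1}. (f (X(i := u * (X i + X j), j := (1 - u) * (X i + X j)),
                          T(i := Tbar X T i j, j := Tbar X T i j)) - f (X, T)) \<partial>lborel))
   + (\<Sum>(i,j)\<in>bd_edges Ed B.
        (\<integral>b\<in>{0..}. exp (- b) * (\<integral>u\<in>{0..1}.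
            (f (X(i := u * (X i + X j), j := b), T(i := Tbar X T i j)) - f (X, T)) \<partial>lborel) \<partial>lborel)))"

definition semigroup :: "(('s \<Rightarrow> real) \<Rightarrow> ('s \<Rightarrow> real)) \<Rightarrow> real \<Rightarrow> ('s \<Rightarrow> real) \<Rightarrow> 's \<Rightarrow> real" where
  "semigroup L t f z = (\<Sum>n. t ^ n / fact n * (L ^^ n) f z)"

text \<open>Finite-dimensional distributions of the Markov process with generator L started at z:
  fdd L [(s1,g1),...,(sn,gn)] z = E_z[g1(Z(s1)) g2(Z(s1+s2)) ... gn(Z(s1+...+sn))].\<close>
fun fdd :: "(('s \<Rightarrow> real) \<Rightarrow> ('s \<Rightarrow> real)) \<Rightarrow> (real \<times> ('s \<Rightarrow> real)) list \<Rightarrow> 's \<Rightarrow> real" where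
  "fdd L [] z = 1"
| "fdd L ((s, g) # ps) z = semigroup L s (\<lambda>w. g w * fdd L ps w) z"

end

theory Submission
  imports Defs "HOL-Probability.Distributions"
begin

lemma meas_borel_prod_lborel:
  fixes H :: "'a::second_countable_topology \<times> real \<Rightarrow> real"
  assumes "H \<in> borel_measurable borel"
  shows "H \<in> borel_measurable (borel \<Otimes>\<^sub>M lborel)"
proof -
  have "sets (borel \<Otimes>\<^sub>M lborel) = sets (borel \<Otimes>\<^sub>M (borel::real measure))"
    by (rule sets_pair_measure_cong) auto
  then have "measurable (borel \<Otimes>\<^sub>M lborel) (borel::real measure) = measurable (borel \<Otimes>\<^sub>M borel) borel"
    by (intro measurable_cong_sets) auto
  moreover have "H \<in> borel_measurable (borel \<Otimes>\<^sub>M borel)" using assms by (simp add: borel_prod)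
  ultimately show ?thesis by simp
qed

lemma meas_int:
  fixes H :: "'a::second_countable_topology \<times> real \<Rightarrow> real"
  assumes "H \<in> borel_measurable borel"
  shows "(\<lambda>x. \<integral>y. H (x,y) \<partial>lborel) \<in> borel_measurable borel"
  using lborel.borel_measurable_lebesgue_integral[of "\<lambda>x y. H (x,y)" borel] meas_borel_prod_lborel[OF assms]
  by simp

lemma cont_upd:
  fixes a b :: "'a::topological_space \<Rightarrow> real" and z :: "'a \<Rightarrow> ('v \<Rightarrow> real)"
  assumes "continuous_on UNIV a" "continuous_on UNIV b" "continuous_on UNIV z"
  shows "continuous_on UNIV (\<lambda>p. (z p)(i := a p, j := b p))"
proof (rule continuous_on_coordinatewise_then_product)
  fix k
  have "continuous_on UNIV (\<lambda>p. z p k)"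
    using continuous_on_product_then_coordinatewise[OF assms(3)] by simp
  then show "continuous_on UNIV (\<lambda>p. ((z p)(i := a p, j := b p)) k)"
    using assms by (cases "k = j"; cases "k = i") auto
qed

lemma exp_int: "integrable lborel (\<lambda>b::real. indicator {0..} b * exp (-b))"
   and exp_int_val: "(\<integral>b. indicator {0..} b * exp (-b) \<partial>lborel) = (1::real)"
proof -
  have e: "(\<integral>\<^sup>+b. ennreal (indicator {0..} b * exp (-b)) \<partial>lborel) = 1"
  proof -
    have "(\<integral>\<^sup>+b. ennreal (indicator {0..} b * exp (-b)) \<partial>lborel) = (\<integral>\<^sup>+b. ennreal (exp (-b)) * indicator {0..} b \<partial>lborel)"
      by (intro nn_integral_cong) (simp split: split_indicator)
    then show ?thesis using nn_intergal_power_times_exp_Ici[of 0] by simp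
  qed
  show i: "integrable lborel (\<lambda>b::real. indicator {0..} b * exp (-b))"
    by (rule integrableI_nonneg) (auto simp: e)
  have "ennreal (\<integral>b. indicator {0..} b * exp (-b) \<partial>lborel) = 1"
    using nn_integral_eq_integral[OF i] e by simp
  then show "(\<integral>b. indicator {0..} b * exp (-b) \<partial>lborel) = (1::real)"
    by simp
qed

lemma int_bound_gen:
  fixes h w :: "real \<Rightarrow> real"
  assumes "h \<in> borel_measurable lborel" "integrable lborel w" "\<And>x. \<bar>h x\<bar> \<le> w x"
  shows "integrable lborel h" "\<bar>\<integral>x. h x \<partial>lborel\<bar> \<le> (\<integral>x. w x \<partial>lborel)"
proof -
  show i: "integrable lborel h"
    by (rule Bochner_Integration.integrable_bound[OF assms(2,1)]) (use assms(3) in \<open>auto intro!: AE_I2 intro: order_trans[OF _ abs_ge_self]\<close>)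
  show "\<bar>\<integral>x. h x \<partial>lborel\<bar> \<le> (\<integral>x. w x \<partial>lborel)"
    by (rule integral_abs_bound_integral[OF i assms(2)]) (use assms(3) in auto)
qed

lemma ind01_int: "integrable lborel (\<lambda>u::real. indicator {0..1} u * c)"
  and ind01_val: "(\<integral>u. indicator {0..1} (u::real) * c \<partial>lborel) = (c::real)"
  using content_real[of 0 "1::real"] by auto

lemma to_lborel: "h \<in> borel_measurable borel \<Longrightarrow> h \<in> borel_measurable lborel"
  by (simp add: measurable_cong_sets[OF sets_lborel refl])

lemma sect:
  fixes h :: "'a::topological_space \<times> real \<Rightarrow> real"
  assumes "h \<in> borel_measurable borel"
  shows "(\<lambda>u. h (z, u)) \<in> borel_measurable lborel"
proof -
  have "(\<lambda>u::real. (z, u)) \<in> borel_measurable borel"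
    by (intro borel_measurable_continuous_onI continuous_intros)
  then show ?thesis using to_lborel measurable_compose assms by blast
qed

lemma cont_coord:
  fixes z :: "'a::topological_space \<Rightarrow> ('v \<Rightarrow> real)"
  assumes "continuous_on UNIV z"
  shows "continuous_on UNIV (\<lambda>p. z p k)"
  using continuous_on_product_then_coordinatewise[OF assms] by simp

lemma meas_ind01: "(\<lambda>p::'a::topological_space \<times> real. indicator {0..1} (snd p) :: real) \<in> borel_measurable borel"
proof -
  have "snd \<in> measurable (borel :: ('a \<times> real) measure) borel"
    by (intro borel_measurable_continuous_onI continuous_intros)
  moreover have "(indicator {0..1} :: real \<Rightarrow> real) \<in> borel_measurable borel" by simp
  ultimately show ?thesis using measurable_compose by (metis comp_def)
qed

lemma meas_ind0: "(\<lambda>p::'a::topological_space \<times> real. indicator {0..} (snd p) :: real) \<in> borel_measurable borel"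
proof -
  have "snd \<in> measurable (borel :: ('a \<times> real) measure) borel"
    by (intro borel_measurable_continuous_onI continuous_intros)
  moreover have "(indicator {0..} :: real \<Rightarrow> real) \<in> borel_measurable borel" by simp
  ultimately show ?thesis using measurable_compose by (metis comp_def)
qed

lemma term1:
  fixes f :: "('v::finite \<Rightarrow> real) \<Rightarrow> real"
  assumes fm: "f \<in> borel_measurable borel" and fb: "\<And>x. \<bar>f x\<bar> \<le> C"
  shows "(\<lambda>z. \<integral>u\<in>{0..1}. (f (z(i := u * (z i + z j), j := (1 - u) * (z i + z j))) - f z) \<partial>lborel) \<in> borel_measurable borel"
    and "\<bar>\<integral>u\<in>{0..1}. (f (z(i := u * (z i + z j), j := (1 - u) * (z i + z j))) - f z) \<partial>lborel\<bar> \<le> 2 * C"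
proof -
  define H where "H = (\<lambda>p::('v \<Rightarrow> real) \<times> real. indicator {0..1} (snd p) *\<^sub>R
     (f ((fst p)(i := snd p * (fst p i + fst p j), j := (1 - snd p) * (fst p i + fst p j))) - f (fst p)))"
  have c: "continuous_on UNIV (\<lambda>p::('v \<Rightarrow> real) \<times> real. (fst p)(i := snd p * (fst p i + fst p j), j := (1 - snd p) * (fst p i + fst p j)))"
    by (intro cont_upd continuous_intros cont_coord)
  have m1: "(\<lambda>p::('v \<Rightarrow> real) \<times> real. f ((fst p)(i := snd p * (fst p i + fst p j), j := (1 - snd p) * (fst p i + fst p j)))) \<in> borel_measurable borel"
    using measurable_compose[OF borel_measurable_continuous_onI[OF c] fm] by (simp add: comp_def)
  have m2: "(\<lambda>p::('v \<Rightarrow> real) \<times> real. f (fst p)) \<in> borel_measurable borel"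
    using measurable_compose[OF borel_measurable_continuous_onI[OF continuous_on_fst[OF continuous_on_id]] fm] by (simp add: comp_def)
  have Hm: "H \<in> borel_measurable borel"
    unfolding H_def by (intro borel_measurable_scaleR meas_ind01 borel_measurable_diff m1 m2)
  show "(\<lambda>z. \<integral>u\<in>{0..1}. (f (z(i := u * (z i + z j), j := (1 - u) * (z i + z j))) - f z) \<partial>lborel) \<in> borel_measurable borel"
    using meas_int[OF Hm] by (simp add: H_def set_lebesgue_integral_def)
  have "\<bar>\<integral>u. H (z, u) \<partial>lborel\<bar> \<le> (\<integral>u. indicator {0..1} (u::real) * (2 * C) \<partial>lborel)"
  proof (rule int_bound_gen(2)[where h="\<lambda>u. H (z,u)"])
    show "(\<lambda>u. H (z, u)) \<in> borel_measurable lborel" by (rule sect[OF Hm])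
    show "integrable lborel (\<lambda>u::real. indicator {0..1} u * (2 * C))" by (rule ind01_int)
    fix u :: real
    have "\<bar>f (z(i := u * (z i + z j), j := (1 - u) * (z i + z j))) - f z\<bar> \<le> 2 * C"
      using fb[of z] fb[of "z(i := u * (z i + z j), j := (1 - u) * (z i + z j))"] by linarith
    then show "\<bar>H (z, u)\<bar> \<le> indicator {0..1} u * (2 * C)"
      using fb[of z] by (auto simp: H_def split: split_indicator)
  qed
  then show "\<bar>\<integral>u\<in>{0..1}. (f (z(i := u * (z i + z j), j := (1 - u) * (z i + z j))) - f z) \<partial>lborel\<bar> \<le> 2 * C"
    by (simp add: H_def set_lebesgue_integral_def ind01_val)
qed

lemma term2:
  fixes f :: "('v::finite \<Rightarrow> real) \<Rightarrow> real"
  assumes fm: "f \<in> borel_measurable borel" and fb: "\<And>x. \<bar>f x\<bar> \<le> C"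
  shows "(\<lambda>z. \<integral>u\<in>{0..1}. (\<integral>b\<in>{0..}. exp (- b) *
            (f (z(i := u * (z i + z j), j := b * Tb j)) - f z) \<partial>lborel) \<partial>lborel) \<in> borel_measurable borel"
    and "\<bar>\<integral>u\<in>{0..1}. (\<integral>b\<in>{0..}. exp (- b) *
            (f (z(i := u * (z i + z j), j := b * Tb j)) - f z) \<partial>lborel) \<partial>lborel\<bar> \<le> 2 * C"
proof -
  define H2 where "H2 = (\<lambda>q::(('v \<Rightarrow> real) \<times> real) \<times> real. indicator {0..} (snd q) *\<^sub>R (exp (- snd q) *
     (f ((fst (fst q))(i := snd (fst q) * (fst (fst q) i + fst (fst q) j), j := snd q * Tb j)) - f (fst (fst q)))))"
  define G where "G = (\<lambda>p. \<integral>b. H2 (p, b) \<partial>lborel)"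
  define H where "H = (\<lambda>p::('v \<Rightarrow> real) \<times> real. indicator {0..1} (snd p) *\<^sub>R G p)"
  have c: "continuous_on UNIV (\<lambda>q::(('v \<Rightarrow> real) \<times> real) \<times> real. (fst (fst q))(i := snd (fst q) * (fst (fst q) i + fst (fst q) j), j := snd q * Tb j))"
    by (intro cont_upd continuous_intros cont_coord)
  have m1: "(\<lambda>q::(('v \<Rightarrow> real) \<times> real) \<times> real. f ((fst (fst q))(i := snd (fst q) * (fst (fst q) i + fst (fst q) j), j := snd q * Tb j))) \<in> borel_measurable borel"
    using measurable_compose[OF borel_measurable_continuous_onI[OF c] fm] by (simp add: comp_def)
  have c2: "continuous_on UNIV (\<lambda>q::(('v \<Rightarrow> real) \<times> real) \<times> real. fst (fst q))"
    by (intro continuous_intros)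
  have m2: "(\<lambda>q::(('v \<Rightarrow> real) \<times> real) \<times> real. f (fst (fst q))) \<in> borel_measurable borel"
    using measurable_compose[OF borel_measurable_continuous_onI[OF c2] fm] by (simp add: comp_def)
  have m3: "(\<lambda>q::(('v \<Rightarrow> real) \<times> real) \<times> real. exp (- snd q)) \<in> borel_measurable borel"
    by (intro borel_measurable_continuous_onI continuous_intros)
  have H2m: "H2 \<in> borel_measurable borel"
    unfolding H2_def by (intro borel_measurable_scaleR meas_ind0 borel_measurable_diff borel_measurable_times m1 m2 m3)
  have Gm: "G \<in> borel_measurable borel"
    unfolding G_def by (rule meas_int[OF H2m])
  have Hm: "H \<in> borel_measurable borel"
    unfolding H_def by (intro borel_measurable_scaleR meas_ind01 Gm)
  show "(\<lambda>z. \<integral>u\<in>{0..1}. (\<integral>b\<in>{0..}. exp (- b) *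
            (f (z(i := u * (z i + z j), j := b * Tb j)) - f z) \<partial>lborel) \<partial>lborel) \<in> borel_measurable borel"
    using meas_int[OF Hm] by (simp add: H_def G_def H2_def set_lebesgue_integral_def)
  have Gb: "\<bar>G (z, u)\<bar> \<le> 2 * C" for u
  proof -
    have "\<bar>\<integral>b. H2 ((z, u), b) \<partial>lborel\<bar> \<le> (\<integral>b. 2 * C * (indicator {0..} (b::real) * exp (- b)) \<partial>lborel)"
    proof (rule int_bound_gen(2)[where h="\<lambda>b. H2 ((z,u),b)"])
      show "(\<lambda>b. H2 ((z,u), b)) \<in> borel_measurable lborel" by (rule sect[OF H2m])
      show "integrable lborel (\<lambda>b::real. 2 * C * (indicator {0..} b * exp (- b)))"
        using exp_int by simp
      fix b :: real
      have "\<bar>f (z(i := u * (z i + z j), j := b * Tb j)) - f z\<bar> \<le> 2 * C"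
        using fb[of z] fb[of "z(i := u * (z i + z j), j := b * Tb j)"] by linarith
      then have "exp (- b) * \<bar>f (z(i := u * (z i + z j), j := b * Tb j)) - f z\<bar> \<le> exp (- b) * (2 * C)"
        by (intro mult_left_mono) auto
      then show "\<bar>H2 ((z,u), b)\<bar> \<le> 2 * C * (indicator {0..} b * exp (- b))"
        by (auto simp: H2_def abs_mult split: split_indicator)
    qed
    also have "\<dots> = 2 * C" using exp_int_val by simp
    finally show ?thesis by (simp add: G_def)
  qed
  have "\<bar>\<integral>u. H (z, u) \<partial>lborel\<bar> \<le> (\<integral>u. indicator {0..1} (u::real) * (2 * C) \<partial>lborel)"
  proof (rule int_bound_gen(2)[where h="\<lambda>u. H (z,u)"])
    show "(\<lambda>u. H (z, u)) \<in> borel_measurable lborel" by (rule sect[OF Hm])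
    show "integrable lborel (\<lambda>u::real. indicator {0..1} u * (2 * C))" by (rule ind01_int)
    fix u :: real
    show "\<bar>H (z, u)\<bar> \<le> indicator {0..1} u * (2 * C)"
      using fb[of z] Gb[of u] by (auto simp: H_def split: split_indicator)
  qed
  then show "\<bar>\<integral>u\<in>{0..1}. (\<integral>b\<in>{0..}. exp (- b) *
            (f (z(i := u * (z i + z j), j := b * Tb j)) - f z) \<partial>lborel) \<partial>lborel\<bar> \<le> 2 * C"
    by (simp add: H_def G_def H2_def set_lebesgue_integral_def ind01_val)
qed

lemma kmp_pres:
  fixes f :: "('v::finite \<Rightarrow> real) \<Rightarrow> real"
  assumes fm: "f \<in> borel_measurable borel" and fb: "\<And>x. \<bar>f x\<bar> \<le> C"
  shows "KMP_gen Ed B Tb f \<in> borel_measurable borel"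
    and "\<bar>KMP_gen Ed B Tb f z\<bar> \<le> (2 * real (card (int_edges Ed B) + card (bd_edges Ed B))) * C"
proof -
  show "KMP_gen Ed B Tb f \<in> borel_measurable borel"
    unfolding KMP_gen_def
    by (intro borel_measurable_add borel_measurable_sum)
       (auto simp: term1(1)[OF fm fb] term2(1)[OF fm fb])
  have s1: "\<bar>\<Sum>(i,j)\<in>int_edges Ed B.
        (\<integral>u\<in>{0..1}. (f (z(i := u * (z i + z j), j := (1 - u) * (z i + z j))) - f z) \<partial>lborel)\<bar>
     \<le> (\<Sum>(i,j)\<in>int_edges Ed B. 2 * C)"
    by (rule order_trans[OF sum_abs]) (intro sum_mono, auto simp: term1(2)[OF fm fb])
  have s2: "\<bar>\<Sum>(i,j)\<in>bd_edges Ed B.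
        (\<integral>u\<in>{0..1}. (\<integral>b\<in>{0..}. exp (- b) *
            (f (z(i := u * (z i + z j), j := b * Tb j)) - f z) \<partial>lborel) \<partial>lborel)\<bar>
     \<le> (\<Sum>(i,j)\<in>bd_edges Ed B. 2 * C)"
    by (rule order_trans[OF sum_abs]) (intro sum_mono, auto simp: term2(2)[OF fm fb])
  show "\<bar>KMP_gen Ed B Tb f z\<bar> \<le> (2 * real (card (int_edges Ed B) + card (bd_edges Ed B))) * C"
    unfolding KMP_gen_def using s1 s2 by (auto simp: algebra_simps)
qed

definition bdd_meas :: "('s::topological_space \<Rightarrow> real) set" where
  "bdd_meas = {f. f \<in> borel_measurable borel \<and> (\<exists>C. \<forall>x. \<bar>f x\<bar> \<le> C)}"

lemma semigroup_pres:
  fixes L :: "('s::topological_space \<Rightarrow> real) \<Rightarrow> ('s \<Rightarrow> real)"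
  assumes K: "K \<ge> 0"
    and LP: "\<And>f C. f \<in> borel_measurable borel \<Longrightarrow> (\<And>x. \<bar>f x\<bar> \<le> C) \<Longrightarrow>
                 L f \<in> borel_measurable borel \<and> (\<forall>x. \<bar>L f x\<bar> \<le> K * C)"
    and f: "f \<in> bdd_meas"
  shows "semigroup L t f \<in> bdd_meas"
proof -
  obtain C where fm: "f \<in> borel_measurable borel" and fb: "\<And>x. \<bar>f x\<bar> \<le> C"
    using f by (auto simp: bdd_meas_def)
  have it: "(L ^^ n) f \<in> borel_measurable borel \<and> (\<forall>x. \<bar>(L ^^ n) f x\<bar> \<le> K ^ n * C)" for n
  proof (induction n)
    case 0 then show ?case using fm fb by simp
  next
    case (Suc n)
    then have "L ((L ^^ n) f) \<in> borel_measurable borel \<and> (\<forall>x. \<bar>L ((L ^^ n) f) x\<bar> \<le> K * (K ^ n * C))"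
      by (intro LP) auto
    then show ?case by (simp add: mult.assoc)
  qed
  define g where "g = (\<lambda>n. C * (inverse (fact n) * (\<bar>t\<bar> * K) ^ n))"
  have gs: "summable g" unfolding g_def by (intro summable_mult summable_exp)
  have tb: "norm (t ^ n / fact n * (L ^^ n) f x) \<le> g n" for n x
  proof -
    have "norm (t ^ n / fact n * (L ^^ n) f x) = \<bar>t\<bar> ^ n / fact n * \<bar>(L ^^ n) f x\<bar>"
      by (simp add: abs_mult power_abs)
    also have "\<dots> \<le> \<bar>t\<bar> ^ n / fact n * (K ^ n * C)"
      using it[of n] by (intro mult_left_mono) auto
    also have "\<dots> = g n" by (simp add: g_def power_mult_distrib field_simps)
    finally show ?thesis .
  qed
  have "semigroup L t f \<in> borel_measurable borel"
    unfolding semigroup_def[abs_def]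
    by (intro borel_measurable_suminf borel_measurable_times borel_measurable_const) (use it in auto)
  moreover have "\<forall>x. \<bar>semigroup L t f x\<bar> \<le> suminf g"
    unfolding semigroup_def using norm_suminf_le[OF tb gs] by simp
  ultimately show ?thesis by (auto simp: bdd_meas_def)
qed

lemma fubini_swap:
  fixes \<Phi> :: "real \<times> real \<Rightarrow> real"
  assumes \<Phi>m: "\<Phi> \<in> borel_measurable borel" and \<Phi>b: "\<And>x. \<bar>\<Phi> x\<bar> \<le> C"
  shows "(\<integral>u\<in>{0..1}. (\<integral>b\<in>{0..}. exp (- b) * \<Phi> (u, b) \<partial>lborel) \<partial>lborel)
       = (\<integral>b\<in>{0..}. exp (- b) * (\<integral>u\<in>{0..1}. \<Phi> (u, b) \<partial>lborel) \<partial>lborel)"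
proof -
  define P where "P = (\<lambda>p::real \<times> real. indicator {0..1} (fst p) * (indicator {0..} (snd p) * (exp (- snd p) * \<Phi> p)))"
  have C0: "0 \<le> C" using \<Phi>b[of "(0,0)"] by linarith
  have mf: "(\<lambda>p::real \<times> real. indicator {0..1} (fst p) :: real) \<in> borel_measurable borel"
  proof -
    have "fst \<in> measurable (borel :: (real \<times> real) measure) borel"
      by (intro borel_measurable_continuous_onI continuous_intros)
    moreover have "(indicator {0..1} :: real \<Rightarrow> real) \<in> borel_measurable borel" by simp
    ultimately show ?thesis using measurable_compose by (metis comp_def)
  qed
  have me: "(\<lambda>p::real \<times> real. exp (- snd p)) \<in> borel_measurable borel"
    by (intro borel_measurable_continuous_onI continuous_intros)
  have Pm: "P \<in> borel_measurable borel"
    unfolding P_def by (intro borel_measurable_times mf meas_ind0 me \<Phi>m)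
  have Pnm: "(\<lambda>p. norm (P p)) \<in> borel_measurable borel"
    using Pm by measurable
  have secb: "integrable lborel (\<lambda>b. P (u, b)) \<and> \<bar>\<integral>b. P (u, b) \<partial>lborel\<bar> \<le> indicator {0..1} u * C
      \<and> \<bar>\<integral>b. norm (P (u, b)) \<partial>lborel\<bar> \<le> indicator {0..1} u * C" for u
  proof (cases "u \<in> {0..1}")
    case True
    have w: "integrable lborel (\<lambda>b::real. C * (indicator {0..} b * exp (- b)))"
      using exp_int by simp
    have wv: "(\<integral>b. C * (indicator {0..} (b::real) * exp (- b)) \<partial>lborel) = C"
      using exp_int_val by simp
    have bd: "\<bar>P (u, b)\<bar> \<le> C * (indicator {0..} b * exp (- b))" for b
    proof -
      have "exp (- b) * \<bar>\<Phi> (u, b)\<bar> \<le> exp (- b) * C" by (intro mult_left_mono \<Phi>b) auto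
      then show ?thesis using True by (auto simp: P_def abs_mult split: split_indicator)
    qed
    have a: "integrable lborel (\<lambda>b. P (u, b))" "\<bar>\<integral>b. P (u, b) \<partial>lborel\<bar> \<le> C"
      using int_bound_gen[OF sect[OF Pm] w bd] wv by auto
    have "\<bar>\<integral>b. norm (P (u, b)) \<partial>lborel\<bar> \<le> C"
      using int_bound_gen(2)[OF sect[OF Pnm] w, of u] bd wv by auto
    then show ?thesis using a True by auto
  next
    case False
    then have z: "\<And>b. P (u, b) = 0" by (auto simp: P_def)
    then show ?thesis using False by simp
  qed
  have integ: "integrable (lborel \<Otimes>\<^sub>M lborel) P"
  proof (rule lborel_pair.Fubini_integrable)
    show "P \<in> borel_measurable (lborel \<Otimes>\<^sub>M lborel)"
    proof -
      have "sets (lborel \<Otimes>\<^sub>M lborel) = sets (borel \<Otimes>\<^sub>M (borel::real measure))"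
        by (rule sets_pair_measure_cong) auto
      then have "measurable (lborel \<Otimes>\<^sub>M lborel) (borel::real measure) = measurable (borel \<Otimes>\<^sub>M borel) borel"
        by (intro measurable_cong_sets) auto
      moreover have "P \<in> borel_measurable (borel \<Otimes>\<^sub>M borel)" using Pm by (simp add: borel_prod)
      ultimately show ?thesis by simp
    qed
    show "integrable lborel (\<lambda>u. \<integral>b. norm (P (u, b)) \<partial>lborel)"
    proof (rule Bochner_Integration.integrable_bound[OF ind01_int[of C]])
      show "(\<lambda>u. \<integral>b. norm (P (u, b)) \<partial>lborel) \<in> borel_measurable lborel"
        using to_lborel[OF meas_int[OF Pnm]] by simp
      show "AE u in lborel. norm (\<integral>b. norm (P (u, b)) \<partial>lborel) \<le> norm (indicator {0..1} u * C)"
        using secb C0 by (intro AE_I2) (auto simp: abs_mult)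
    qed
    show "AE u in lborel. integrable lborel (\<lambda>b. P (u, b))" using secb by simp
  qed
  have F: "(\<integral>b. (\<integral>u. P (u, b) \<partial>lborel) \<partial>lborel) = (\<integral>u. (\<integral>b. P (u, b) \<partial>lborel) \<partial>lborel)"
    using lborel_pair.Fubini_integral[of "\<lambda>u b. P (u, b)"] integ by simp
  have L: "(\<integral>u\<in>{0..1}. (\<integral>b\<in>{0..}. exp (- b) * \<Phi> (u, b) \<partial>lborel) \<partial>lborel) = (\<integral>u. (\<integral>b. P (u, b) \<partial>lborel) \<partial>lborel)"
    unfolding set_lebesgue_integral_def P_def by (simp add: integral_mult_right_zero)
  have R: "(\<integral>b\<in>{0..}. exp (- b) * (\<integral>u\<in>{0..1}. \<Phi> (u, b) \<partial>lborel) \<partial>lborel) = (\<integral>b. (\<integral>u. P (u, b) \<partial>lborel) \<partial>lborel)"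
  proof -
    have "(\<integral>u. P (u, b) \<partial>lborel) = indicator {0..} b * (exp (- b) * (\<integral>u. indicator {0..1} u * \<Phi> (u, b) \<partial>lborel))" for b
    proof -
      have "(\<integral>u. P (u, b) \<partial>lborel) = (\<integral>u. (indicator {0..} b * exp (- b)) * (indicator {0..1} u * \<Phi> (u, b)) \<partial>lborel)"
        by (intro Bochner_Integration.integral_cong) (auto simp: P_def)
      then show ?thesis by (simp add: integral_mult_right_zero)
    qed
    then show ?thesis unfolding set_lebesgue_integral_def by simp
  qed
  show ?thesis using L R F by simp
qed

lemma bdd_meas_mult:
  assumes "g \<in> bdd_meas" "f \<in> bdd_meas"
  shows "(\<lambda>w. g w * f w) \<in> bdd_meas"
proof -
  obtain C1 C2 where 1: "g \<in> borel_measurable borel" "\<And>x. \<bar>g x\<bar> \<le> C1"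
    and 2: "f \<in> borel_measurable borel" "\<And>x. \<bar>f x\<bar> \<le> C2"
    using assms by (auto simp: bdd_meas_def)
  have "\<bar>g x * f x\<bar> \<le> C1 * C2" for x
    unfolding abs_mult by (intro mult_mono 1 2) (use 1(2)[of x] in auto)
  then show ?thesis using 1 2 by (auto simp: bdd_meas_def intro!: borel_measurable_times)
qed

lemma fdd_pres:
  assumes semi: "\<And>f t. f \<in> bdd_meas \<Longrightarrow> semigroup L t f \<in> bdd_meas"
  shows "(\<forall>(t, g)\<in>set ps. g \<in> bdd_meas) \<Longrightarrow> fdd L ps \<in> bdd_meas"
proof (induction ps)
  case Nil
  have "(\<lambda>_. 1::real) \<in> bdd_meas" by (auto simp: bdd_meas_def)
  then show ?case by (simp add: fun_eq_iff[symmetric])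
next
  case (Cons p ps)
  obtain t g where p: "p = (t, g)" by fastforce
  have "(\<lambda>w. g w * fdd L ps w) \<in> bdd_meas"
    using Cons p by (intro bdd_meas_mult) auto
  then have "semigroup L t (\<lambda>w. g w * fdd L ps w) \<in> bdd_meas" by (rule semi)
  moreover have "fdd L (p # ps) = semigroup L t (\<lambda>w. g w * fdd L ps w)"
    by (simp add: p fun_eq_iff)
  ultimately show ?case by simp
qed

lemma transfer:
  fixes LA :: "('a \<Rightarrow> real) \<Rightarrow> ('a \<Rightarrow> real)"
    and LB :: "('b::topological_space \<Rightarrow> real) \<Rightarrow> ('b \<Rightarrow> real)" and \<Phi> :: "'a \<Rightarrow> 'b"
  assumes loc: "\<And>h h' s. (\<And>s. s \<in> D \<Longrightarrow> h s = h' s) \<Longrightarrow> s \<in> D \<Longrightarrow> LA h s = LA h' s"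
    and int: "\<And>f s. f \<in> bdd_meas \<Longrightarrow> s \<in> D \<Longrightarrow> LA (\<lambda>w. f (\<Phi> w)) s = LB f (\<Phi> s)"
    and pres: "\<And>f. f \<in> bdd_meas \<Longrightarrow> LB f \<in> bdd_meas"
    and semi: "\<And>f t. f \<in> bdd_meas \<Longrightarrow> semigroup LB t f \<in> bdd_meas"
  shows "(\<forall>(t, g)\<in>set ps. g \<in> bdd_meas) \<Longrightarrow> s \<in> D \<Longrightarrow>
     fdd LA (map (\<lambda>(t, g). (t, \<lambda>w. g (\<Phi> w))) ps) s = fdd LB ps (\<Phi> s)"
proof -
  have locn: "(\<And>s. s \<in> D \<Longrightarrow> h s = h' s) \<Longrightarrow> s \<in> D \<Longrightarrow> (LA ^^ n) h s = (LA ^^ n) h' s" for n h h' s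
  proof (induction n arbitrary: s)
    case 0 then show ?case by simp
  next
    case (Suc n)
    then show ?case using loc[of "(LA ^^ n) h" "(LA ^^ n) h'" s] by simp
  qed
  have presn: "f \<in> bdd_meas \<Longrightarrow> (LB ^^ n) f \<in> bdd_meas" for n f
    by (induction n) (auto intro: pres)
  have intn: "f \<in> bdd_meas \<Longrightarrow> s \<in> D \<Longrightarrow> (LA ^^ n) (\<lambda>w. f (\<Phi> w)) s = (LB ^^ n) f (\<Phi> s)" for n f s
  proof (induction n arbitrary: s)
    case 0 then show ?case by simp
  next
    case (Suc n)
    have "(LA ^^ Suc n) (\<lambda>w. f (\<Phi> w)) s = LA ((LA ^^ n) (\<lambda>w. f (\<Phi> w))) s" by simp
    also have "\<dots> = LA (\<lambda>w. (LB ^^ n) f (\<Phi> w)) s"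
      by (rule loc) (use Suc in auto)
    also have "\<dots> = LB ((LB ^^ n) f) (\<Phi> s)"
      by (rule int) (use Suc presn in auto)
    finally show ?case by simp
  qed
  have semA: "(\<And>s. s \<in> D \<Longrightarrow> h s = h' s) \<Longrightarrow> s \<in> D \<Longrightarrow> semigroup LA t h s = semigroup LA t h' s" for t h h' s
    unfolding semigroup_def using locn by metis
  have semAB: "f \<in> bdd_meas \<Longrightarrow> s \<in> D \<Longrightarrow> semigroup LA t (\<lambda>w. f (\<Phi> w)) s = semigroup LB t f (\<Phi> s)" for t f s
    unfolding semigroup_def using intn by metis
  show "(\<forall>(t, g)\<in>set ps. g \<in> bdd_meas) \<Longrightarrow> s \<in> D \<Longrightarrow>
     fdd LA (map (\<lambda>(t, g). (t, \<lambda>w. g (\<Phi> w))) ps) s = fdd LB ps (\<Phi> s)"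
  proof (induction ps arbitrary: s)
    case Nil then show ?case by simp
  next
    case (Cons p ps)
    obtain t g where p: "p = (t, g)" by fastforce
    have gb: "g \<in> bdd_meas" using Cons.prems p by auto
    have fb: "fdd LB ps \<in> bdd_meas" using fdd_pres[OF semi] Cons.prems by auto
    have "fdd LA (map (\<lambda>(t, g). (t, \<lambda>w. g (\<Phi> w))) (p # ps)) s
        = semigroup LA t (\<lambda>w. g (\<Phi> w) * fdd LA (map (\<lambda>(t, g). (t, \<lambda>w. g (\<Phi> w))) ps) w) s"
      by (simp add: p)
    also have "\<dots> = semigroup LA t (\<lambda>w. (\<lambda>z. g z * fdd LB ps z) (\<Phi> w)) s"
      by (rule semA) (use Cons in auto)
    also have "\<dots> = semigroup LB t (\<lambda>z. g z * fdd LB ps z) (\<Phi> s)"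
      by (rule semAB) (use Cons bdd_meas_mult[OF gb fb] in auto)
    finally show ?case by (simp add: p)
  qed
qed

lemma int_edge_facts:
  assumes "graph_ok Ed B" "(i, j) \<in> int_edges Ed B"
  shows "i \<notin> B" "j \<notin> B" "i \<noteq> j"
  using assms by (auto simp: graph_ok_def int_edges_def)

lemma bd_edge_facts:
  assumes "graph_ok Ed B" "(i, j) \<in> bd_edges Ed B"
  shows "i \<notin> B" "j \<in> B" "i \<noteq> j"
  using assms by (auto simp: graph_ok_def bd_edges_def)

definition DD :: "'v set \<Rightarrow> ('v \<Rightarrow> real) \<Rightarrow> (('v \<Rightarrow> real) \<times> ('v \<Rightarrow> real)) set" where
  "DD B Tb = {(X, T). (\<forall>i. 0 \<le> X i) \<and> (\<forall>j\<in>B. T j = Tb j)}"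

lemma xt_loc:
  assumes g: "graph_ok Ed B" and hh: "\<And>s. s \<in> DD B Tb \<Longrightarrow> h s = h' s" and s: "s \<in> DD B Tb"
  shows "XT_gen Ed B h s = XT_gen Ed B h' s"
proof -
  obtain X T where sXT: "s = (X, T)" by fastforce
  have X0: "\<And>k. 0 \<le> X k" and TB: "\<And>k. k \<in> B \<Longrightarrow> T k = Tb k" using s by (auto simp: sXT DD_def)
  have hs: "h (X, T) = h' (X, T)" using hh s sXT by simp
  have A: "(\<integral>u\<in>{0..1}. (h (X(i := u * (X i + X j), j := (1 - u) * (X i + X j)),
                          T(i := Tbar X T i j, j := Tbar X T i j)) - h (X, T)) \<partial>lborel)
         = (\<integral>u\<in>{0..1}. (h' (X(i := u * (X i + X j), j := (1 - u) * (X i + X j)),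
                          T(i := Tbar X T i j, j := Tbar X T i j)) - h' (X, T)) \<partial>lborel)"
    if e: "(i, j) \<in> int_edges Ed B" for i j
  proof (rule set_lebesgue_integral_cong)
    show "{0..1::real} \<in> sets lborel" by simp
    show "\<forall>u. u \<in> {0..1} \<longrightarrow> (h (X(i := u * (X i + X j), j := (1 - u) * (X i + X j)),
                          T(i := Tbar X T i j, j := Tbar X T i j)) - h (X, T)) =
               (h' (X(i := u * (X i + X j), j := (1 - u) * (X i + X j)),
                          T(i := Tbar X T i j, j := Tbar X T i j)) - h' (X, T))"
    proof (intro allI impI)
      fix u :: real assume u: "u \<in> {0..1}"
      have "(X(i := u * (X i + X j), j := (1 - u) * (X i + X j)),
                          T(i := Tbar X T i j, j := Tbar X T i j)) \<in> DD B Tb"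
        using u X0[of i] X0[of j] X0 TB int_edge_facts[OF g e]
        by (auto simp: DD_def intro!: mult_nonneg_nonneg)
      then show "(h (X(i := u * (X i + X j), j := (1 - u) * (X i + X j)),
                          T(i := Tbar X T i j, j := Tbar X T i j)) - h (X, T)) =
               (h' (X(i := u * (X i + X j), j := (1 - u) * (X i + X j)),
                          T(i := Tbar X T i j, j := Tbar X T i j)) - h' (X, T))"
        using hh hs by simp
    qed
  qed
  have Bq: "(\<integral>b\<in>{0..}. exp (- b) * (\<integral>u\<in>{0..1}.
            (h (X(i := u * (X i + X j), j := b), T(i := Tbar X T i j)) - h (X, T)) \<partial>lborel) \<partial>lborel)
          = (\<integral>b\<in>{0..}. exp (- b) * (\<integral>u\<in>{0..1}.
            (h' (X(i := u * (X i + X j), j := b), T(i := Tbar X T i j)) - h' (X, T)) \<partial>lborel) \<partial>lborel)"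
    if e: "(i, j) \<in> bd_edges Ed B" for i j
  proof (rule set_lebesgue_integral_cong)
    show "{0::real..} \<in> sets lborel" by simp
    show "\<forall>b. b \<in> {0..} \<longrightarrow> exp (- b) * (\<integral>u\<in>{0..1}.
            (h (X(i := u * (X i + X j), j := b), T(i := Tbar X T i j)) - h (X, T)) \<partial>lborel) =
            exp (- b) * (\<integral>u\<in>{0..1}.
            (h' (X(i := u * (X i + X j), j := b), T(i := Tbar X T i j)) - h' (X, T)) \<partial>lborel)"
    proof (intro allI impI)
      fix b :: real assume b: "b \<in> {0..}"
      have "(\<integral>u\<in>{0..1}.
            (h (X(i := u * (X i + X j), j := b), T(i := Tbar X T i j)) - h (X, T)) \<partial>lborel) =
            (\<integral>u\<in>{0..1}.
            (h' (X(i := u * (X i + X j), j := b), T(i := Tbar X T i j)) - h' (X, T)) \<partial>lborel)"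
      proof (rule set_lebesgue_integral_cong)
        show "{0..1::real} \<in> sets lborel" by simp
        show "\<forall>u. u \<in> {0..1} \<longrightarrow> (h (X(i := u * (X i + X j), j := b), T(i := Tbar X T i j)) - h (X, T)) =
              (h' (X(i := u * (X i + X j), j := b), T(i := Tbar X T i j)) - h' (X, T))"
        proof (intro allI impI)
          fix u :: real assume u: "u \<in> {0..1}"
          have "(X(i := u * (X i + X j), j := b), T(i := Tbar X T i j)) \<in> DD B Tb"
            using u b X0[of i] X0[of j] X0 TB bd_edge_facts[OF g e]
            by (auto simp: DD_def intro!: mult_nonneg_nonneg)
          then show "(h (X(i := u * (X i + X j), j := b), T(i := Tbar X T i j)) - h (X, T)) =
              (h' (X(i := u * (X i + X j), j := b), T(i := Tbar X T i j)) - h' (X, T))"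
            using hh hs by simp
        qed
      qed
      then show "exp (- b) * (\<integral>u\<in>{0..1}.
            (h (X(i := u * (X i + X j), j := b), T(i := Tbar X T i j)) - h (X, T)) \<partial>lborel) =
            exp (- b) * (\<integral>u\<in>{0..1}.
            (h' (X(i := u * (X i + X j), j := b), T(i := Tbar X T i j)) - h' (X, T)) \<partial>lborel)"
        by simp
    qed
  qed
  show ?thesis
    unfolding sXT XT_gen_def using A Bq
    by (auto intro!: arg_cong2[where f="(+)"] sum.cong)
qed

lemma prod_upd2:
  "(\<lambda>k. (X(i := a, j := c)) k * (T(i := t1, j := t2)) k) = (\<lambda>k. X k * T k)(i := a * t1, j := c * t2)"
  by (auto simp: fun_eq_iff)

lemma prod_upd1:
  "i \<noteq> j \<Longrightarrow> (\<lambda>k. (X(i := a, j := c)) k * (T(i := t1)) k) = (\<lambda>k. X k * T k)(i := a * t1, j := c * T j)"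
  by (auto simp: fun_eq_iff)

lemma sumTbar:
  fixes X T :: "'v \<Rightarrow> real"
  assumes "0 \<le> X i" "0 \<le> X j"
  shows "(X i + X j) * Tbar X T i j = X i * T i + X j * T j"
proof (cases "X i + X j = 0")
  case True
  then have "X i = 0" "X j = 0" using assms by linarith+
  then show ?thesis by (simp add: Tbar_def)
next
  case False
  have "(X i + X j) * Tbar X T i j = (X i + X j) * (X i * T i + X j * T j) / (X i + X j)"
    by (simp add: Tbar_def add_divide_distrib[symmetric] algebra_simps)
  then show ?thesis using False by simp
qed

lemma bd_swap:
  fixes f :: "('v::finite \<Rightarrow> real) \<Rightarrow> real"
  assumes f: "f \<in> bdd_meas"
    and heq: "\<And>u b. h (X(i := u * (X i + X j), j := b), T(i := Tbar X T i j)) = f (z(i := u * (z i + z j), j := b * c))"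
    and h0: "h (X, T) = f z"
  shows "(\<integral>b\<in>{0..}. exp (- b) * (\<integral>u\<in>{0..1}.
            (h (X(i := u * (X i + X j), j := b), T(i := Tbar X T i j)) - h (X, T)) \<partial>lborel) \<partial>lborel)
       = (\<integral>u\<in>{0..1}. (\<integral>b\<in>{0..}. exp (- b) *
            (f (z(i := u * (z i + z j), j := b * c)) - f z) \<partial>lborel) \<partial>lborel)"
proof -
  obtain C where fm: "f \<in> borel_measurable borel" and fb: "\<And>x. \<bar>f x\<bar> \<le> C"
    using f by (auto simp: bdd_meas_def)
  define \<Phi> where "\<Phi> = (\<lambda>p::real \<times> real. f (z(i := fst p * (z i + z j), j := snd p * c)) - f z)"
  have cc: "continuous_on UNIV (\<lambda>p::real \<times> real. z(i := fst p * (z i + z j), j := snd p * c))"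
    by (intro cont_upd continuous_intros)
  have \<Phi>m: "\<Phi> \<in> borel_measurable borel"
    unfolding \<Phi>_def
    using measurable_compose[OF borel_measurable_continuous_onI[OF cc] fm]
    by (intro borel_measurable_diff) (auto simp: comp_def)
  have \<Phi>b: "\<bar>\<Phi> p\<bar> \<le> 2 * C" for p
    unfolding \<Phi>_def using fb[of z] fb[of "z(i := fst p * (z i + z j), j := snd p * c)"] by linarith
  show ?thesis
    using fubini_swap[OF \<Phi>m \<Phi>b] by (simp add: heq h0 \<Phi>_def)
qed

lemma int_swap_eq:
  assumes "\<And>u. h (X(i := u * (X i + X j), j := (1 - u) * (X i + X j)), T(i := Tbar X T i j, j := Tbar X T i j))
              = f (z(i := u * (z i + z j), j := (1 - u) * (z i + z j)))"
    and "h (X, T) = f z"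
  shows "(\<integral>u\<in>{0..1}. (h (X(i := u * (X i + X j), j := (1 - u) * (X i + X j)),
                          T(i := Tbar X T i j, j := Tbar X T i j)) - h (X, T)) \<partial>lborel)
       = (\<integral>u\<in>{0..1}. (f (z(i := u * (z i + z j), j := (1 - u) * (z i + z j))) - f z) \<partial>lborel)"
  using assms by simp

lemma xt_int1:
  fixes f :: "('v::finite \<Rightarrow> real) \<Rightarrow> real"
  assumes f: "f \<in> bdd_meas"
  shows "XT_gen Ed B (\<lambda>w. f (fst w)) (X, T) = KMP_gen Ed B (\<lambda>_. 1) f X"
  unfolding XT_gen_def KMP_gen_def prod.case
  apply (intro arg_cong2[where f="(+)"] sum.cong refl)
  subgoal for x
  proof (cases x)
    case (Pair i j)
    show ?thesis unfolding Pair prod.case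
      by (rule int_swap_eq[where h="\<lambda>w. f (fst w)" and z=X]) (simp_all add: fun_upd_def)
  qed
  subgoal for x
  proof (cases x)
    case (Pair i j)
    show ?thesis unfolding Pair prod.case
      by (rule bd_swap[OF f, where h="\<lambda>w. f (fst w)" and z=X]) simp_all
  qed
  done

lemma xt_int2:
  fixes f :: "('v::finite \<Rightarrow> real) \<Rightarrow> real"
  assumes g: "graph_ok Ed B" and f: "f \<in> bdd_meas" and s: "(X, T) \<in> DD B Tb"
  shows "XT_gen Ed B (\<lambda>w. f (\<lambda>k. fst w k * snd w k)) (X, T) = KMP_gen Ed B Tb f (\<lambda>k. X k * T k)"
proof -
  have X0: "\<And>k. 0 \<le> X k" and TB: "\<And>k. k \<in> B \<Longrightarrow> T k = Tb k" using s by (auto simp: DD_def)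
  show ?thesis
  unfolding XT_gen_def KMP_gen_def prod.case
  apply (intro arg_cong2[where f="(+)"] sum.cong refl)
  subgoal for x
  proof (cases x)
    case (Pair i j)
    have e: "(\<lambda>k. (X(i := u * (X i + X j), j := (1 - u) * (X i + X j))) k * (T(i := Tbar X T i j, j := Tbar X T i j)) k)
        = (\<lambda>k. X k * T k)(i := u * (X i * T i + X j * T j), j := (1 - u) * (X i * T i + X j * T j))" for u
      unfolding prod_upd2 using sumTbar[of X i j T, OF X0 X0] by (simp add: mult.assoc)
    show ?thesis unfolding Pair prod.case
      by (rule int_swap_eq[where h="\<lambda>w. f (\<lambda>k. fst w k * snd w k)" and z="\<lambda>k. X k * T k"]) (simp_all only: fst_conv snd_conv e)
  qed
  subgoal for x
  proof (cases x)
    case (Pair i j)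
    assume "x \<in> bd_edges Ed B"
    then have ij: "i \<noteq> j" "j \<in> B" using bd_edge_facts[OF g] Pair by auto
    have e: "(\<lambda>k. (X(i := u * (X i + X j), j := b)) k * (T(i := Tbar X T i j)) k)
        = (\<lambda>k. X k * T k)(i := u * (X i * T i + X j * T j), j := b * Tb j)" for u b
      unfolding prod_upd1[OF ij(1)] using sumTbar[of X i j T, OF X0 X0] TB[OF ij(2)] by (simp add: mult.assoc)
    show ?thesis unfolding Pair prod.case
      by (rule bd_swap[OF f, where h="\<lambda>w. f (\<lambda>k. fst w k * snd w k)" and z="\<lambda>k. X k * T k"]) (simp_all only: fst_conv snd_conv e)
  qed
  done
qed

lemma kmp_bdd:
  fixes Tb :: "'v::finite \<Rightarrow> real"
  shows "f \<in> bdd_meas \<Longrightarrow> KMP_gen Ed B Tb f \<in> bdd_meas"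
    and "f \<in> bdd_meas \<Longrightarrow> semigroup (KMP_gen Ed B Tb) t f \<in> bdd_meas"
proof -
  define K where "K = 2 * real (card (int_edges Ed B) + card (bd_edges Ed B))"
  have LP: "KMP_gen Ed B Tb g \<in> borel_measurable borel \<and> (\<forall>x. \<bar>KMP_gen Ed B Tb g x\<bar> \<le> K * C)"
    if "g \<in> borel_measurable borel" "\<And>x. \<bar>g x\<bar> \<le> C" for g C
    using kmp_pres[OF that] by (auto simp: K_def)
  show "f \<in> bdd_meas \<Longrightarrow> KMP_gen Ed B Tb f \<in> bdd_meas"
    using LP by (auto simp: bdd_meas_def)
  show "f \<in> bdd_meas \<Longrightarrow> semigroup (KMP_gen Ed B Tb) t f \<in> bdd_meas"
    by (rule semigroup_pres[OF _ LP]) (auto simp: K_def)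
qed

theorem proposition2p2:
  fixes Ed :: "('v::finite \<times> 'v) set" and B :: "'v set" and Tb :: "'v \<Rightarrow> real"
    and X0 T0 :: "'v \<Rightarrow> real"
  assumes "graph_ok Ed B"
    and "\<forall>j\<in>B. Tb j > 0"
    and "\<forall>i. X0 i \<ge> 0" and "\<forall>i. T0 i \<ge> 0"
    and "\<forall>j\<in>B. T0 j = Tb j"
  shows "\<forall>ps :: (real \<times> (('v \<Rightarrow> real) \<Rightarrow> real)) list.
           (\<forall>(s, g)\<in>set ps. s \<ge> 0 \<and> g \<in> borel_measurable borel \<and> (\<exists>C. \<forall>x. \<bar>g x\<bar> \<le> C)) \<longrightarrow>
             fdd (XT_gen Ed B) (map (\<lambda>(s, g). (s, \<lambda>(X, T). g X)) ps) (X0, T0)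
               = fdd (KMP_gen Ed B (\<lambda>_. 1)) ps X0
           \<and> fdd (XT_gen Ed B) (map (\<lambda>(s, g). (s, \<lambda>(X, T). g (\<lambda>i. X i * T i))) ps) (X0, T0)
               = fdd (KMP_gen Ed B Tb) ps (\<lambda>i. X0 i * T0 i)"
proof (intro allI impI)
  fix ps :: "(real \<times> (('v \<Rightarrow> real) \<Rightarrow> real)) list"
  assume H: "\<forall>(s, g)\<in>set ps. s \<ge> 0 \<and> g \<in> borel_measurable borel \<and> (\<exists>C. \<forall>x. \<bar>g x\<bar> \<le> C)"
  have g: "graph_ok Ed B" using assms(1) .
  have psb: "\<forall>(t, g)\<in>set ps. g \<in> bdd_meas" using H by (auto simp: bdd_meas_def)
  have s0: "(X0, T0) \<in> DD B Tb" using assms by (auto simp: DD_def)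
  have m1: "map (\<lambda>(s, g). (s, \<lambda>(X, T). g X)) ps = map (\<lambda>(t, g). (t, \<lambda>w. g (fst w))) ps"
    by (simp add: case_prod_unfold)
  have m2: "map (\<lambda>(s, g). (s, \<lambda>(X, T). g (\<lambda>i. X i * T i))) ps
      = map (\<lambda>(t, g). (t, \<lambda>w. g ((\<lambda>w. \<lambda>k. fst w k * snd w k) w))) ps"
    by (simp add: case_prod_unfold)
  have r1: "fdd (XT_gen Ed B) (map (\<lambda>(t, g). (t, \<lambda>w. g (fst w))) ps) (X0, T0) = fdd (KMP_gen Ed B (\<lambda>_. 1)) ps (fst (X0, T0))"
  proof (rule transfer[where D="DD B Tb"])
    show "\<And>h h' s. (\<And>s. s \<in> DD B Tb \<Longrightarrow> h s = h' s) \<Longrightarrow> s \<in> DD B Tb \<Longrightarrow> XT_gen Ed B h s = XT_gen Ed B h' s"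
      using xt_loc[OF g] by blast
    show "\<And>f s. f \<in> bdd_meas \<Longrightarrow> s \<in> DD B Tb \<Longrightarrow> XT_gen Ed B (\<lambda>w. f (fst w)) s = KMP_gen Ed B (\<lambda>_. 1) f (fst s)"
    proof -
      fix f :: "('v \<Rightarrow> real) \<Rightarrow> real" and s assume f: "f \<in> bdd_meas" and "s \<in> DD B Tb"
      obtain X T where "s = (X, T)" by fastforce
      then show "XT_gen Ed B (\<lambda>w. f (fst w)) s = KMP_gen Ed B (\<lambda>_. 1) f (fst s)"
        using xt_int1[OF f] by simp
    qed
    show "\<And>f. f \<in> bdd_meas \<Longrightarrow> KMP_gen Ed B (\<lambda>_. 1) f \<in> bdd_meas" by (rule kmp_bdd(1))
    show "\<And>f t. f \<in> bdd_meas \<Longrightarrow> semigroup (KMP_gen Ed B (\<lambda>_. 1)) t f \<in> bdd_meas" by (rule kmp_bdd(2))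
  qed (fact psb, fact s0)
  have r2: "fdd (XT_gen Ed B) (map (\<lambda>(t, g). (t, \<lambda>w. g ((\<lambda>w. \<lambda>k. fst w k * snd w k) w))) ps) (X0, T0)
      = fdd (KMP_gen Ed B Tb) ps ((\<lambda>w. \<lambda>k. fst w k * snd w k) (X0, T0))"
  proof (rule transfer[where D="DD B Tb"])
    show "\<And>h h' s. (\<And>s. s \<in> DD B Tb \<Longrightarrow> h s = h' s) \<Longrightarrow> s \<in> DD B Tb \<Longrightarrow> XT_gen Ed B h s = XT_gen Ed B h' s"
      using xt_loc[OF g] by blast
    show "\<And>f s. f \<in> bdd_meas \<Longrightarrow> s \<in> DD B Tb \<Longrightarrow> XT_gen Ed B (\<lambda>w. f ((\<lambda>w. \<lambda>k. fst w k * snd w k) w)) s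
              = KMP_gen Ed B Tb f ((\<lambda>w. \<lambda>k. fst w k * snd w k) s)"
    proof -
      fix f :: "('v \<Rightarrow> real) \<Rightarrow> real" and s assume f: "f \<in> bdd_meas" and s: "s \<in> DD B Tb"
      obtain X T where sXT: "s = (X, T)" by fastforce
      then show "XT_gen Ed B (\<lambda>w. f ((\<lambda>w. \<lambda>k. fst w k * snd w k) w)) s
              = KMP_gen Ed B Tb f ((\<lambda>w. \<lambda>k. fst w k * snd w k) s)"
        using xt_int2[OF g f] s by simp
    qed
    show "\<And>f. f \<in> bdd_meas \<Longrightarrow> KMP_gen Ed B Tb f \<in> bdd_meas" by (rule kmp_bdd(1))
    show "\<And>f t. f \<in> bdd_meas \<Longrightarrow> semigroup (KMP_gen Ed B Tb) t f \<in> bdd_meas" by (rule kmp_bdd(2))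
  qed (fact psb, fact s0)
  show "fdd (XT_gen Ed B) (map (\<lambda>(s, g). (s, \<lambda>(X, T). g X)) ps) (X0, T0)
               = fdd (KMP_gen Ed B (\<lambda>_. 1)) ps X0
           \<and> fdd (XT_gen Ed B) (map (\<lambda>(s, g). (s, \<lambda>(X, T). g (\<lambda>i. X i * T i))) ps) (X0, T0)
               = fdd (KMP_gen Ed B Tb) ps (\<lambda>i. X0 i * T0 i)"
    using r1 r2 unfolding m1 m2 by simp
qed

end
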